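(* For every $v\in\,]-\infty,-\mu_\kappa[\,\cap\mathbb Z_{d,\ell}$ one has $\epsilon(v)=-\mu_\kappa-v>0$, and $\epsilon(-\mu_\kappa)=\min(\mathcal V_1\setminus\{-\mu_\kappa\})+\mu_\kappa$ (with $\min\emptyset=+\infty$).
   Context: Let $\mathbf K$ be a field and $\ell\geq 2$ an integer. Let $L=a_n\phi_\ell^n+\dots+a_0$ with $n\geq1$, $a_i\in\mathbf K[z]$, $a_0a_n\neq0$, where $\phi_\ell(f)(z)=f(z^\ell)$ acting on Hahn series with coefficients in $\mathbf K$ and value group $\mathbb Q$. Let $\mathcal P(L)=\{(\ell^i,j): 0\le i\le n,\ j\in\operatorname{supp} a_i\}$. The Newton polygon of $L$ is the convex hull of $\{(\ell^i,j): 0\le i\le n,\ j\geq\operatorname{val} a_i\}\subset\mathbb R^2$; its non-vertical edges have slopes $\mu_1<\dots<\mu_\kappa$, $\mathcal S(L)=\{\mu_1,\dots,\mu_\kappa\}$. Let $d\geq1$ be a common multiple of the denominators of the $\mu_k$ and $\mathbb Z_{d,\ell}=\bigcup_{i\geq0}\frac{1}{d\ell^i}\mathbb Z$. Define $\Psi(v)=\{v\ell^i+j:(\ell^i,j)\in\mathcal P(L)\}$, $\pi(q)=\max\{(q-j)/\ell^i:(\ell^i,j)\in\mathcal P(L)\}$. Let $\mathcal V_0=-\mathcal S(L)$, $\mathcal V_{i+1}=\bigcup_{v\in\mathcal V_i}\pi(\Psi(v))$, $\mathcal V=\bigcup_{i\ge0}\mathcal V_i$ (a well-ordered set). For $v\in\mathbb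 Q$ let $\epsilon(v)=\min\{w\in\mathcal V: w>v\}-v\in\mathbb Q_{>0}\cup\{+\infty\}$ ($+\infty$ if this set is empty). *)

theory Defs
  imports "HOL-Analysis.Analysis" "HOL-Computational_Algebra.Polynomial"
begin

text \<open>The operator L = a_n phi_l^n + ... + a_0 is represented by its coefficient
  family a :: nat => 'k poly (only a 0, ..., a n matter), the order n and l.\<close>

definition pval :: "'k::zero poly \<Rightarrow> nat" where
  "pval p = (LEAST j. coeff p j \<noteq> 0)"

definition PL :: "nat \<Rightarrow> nat \<Rightarrow> (nat \<Rightarrow> 'k::zero poly) \<Rightarrow> (real \<times> real) set" where
  "PL l n a = {(real (l ^ i), real j) | i j. i \<le> n \<and> coeff (a i) j \<noteq> 0}"

definition newton_polygon :: "nat \<Rightarrow> nat \<Rightarrow> (nat \<Rightarrow> 'k::zero poly) \<Rightarrow> (real \<times> real) set" where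
  "newton_polygon l n a =
     convex hull {(real (l ^ i), y) | i y. i \<le> n \<and> a i \<noteq> 0 \<and> y \<ge> real (pval (a i))}"

definition slopes :: "nat \<Rightarrow> nat \<Rightarrow> (nat \<Rightarrow> 'k::zero poly) \<Rightarrow> real set" where
  "slopes l n a = {\<mu>. \<exists>F. F face_of newton_polygon l n a \<and> aff_dim F = 1 \<and>
      (\<exists>p\<in>F. \<exists>q\<in>F. fst p \<noteq> fst q \<and> \<mu> = (snd q - snd p) / (fst q - fst p))}"

definition Zdl :: "nat \<Rightarrow> nat \<Rightarrow> real set" where
  "Zdl d l = {x. \<exists>i::nat. \<exists>k::int. x = real_of_int k / (real d * real l ^ i)}"

definition Psi :: "nat \<Rightarrow> nat \<Rightarrow> (nat \<Rightarrow> 'k::zero poly) \<Rightarrow> real \<Rightarrow> real set" where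
  "Psi l n a v = {v * x + y | x y. (x, y) \<in> PL l n a}"

definition piL :: "nat \<Rightarrow> nat \<Rightarrow> (nat \<Rightarrow> 'k::zero poly) \<Rightarrow> real \<Rightarrow> real" where
  "piL l n a q = Max {(q - y) / x | x y. (x, y) \<in> PL l n a}"

primrec Vs :: "nat \<Rightarrow> nat \<Rightarrow> (nat \<Rightarrow> 'k::zero poly) \<Rightarrow> nat \<Rightarrow> real set" where
  "Vs l n a 0 = uminus ` slopes l n a"
| "Vs l n a (Suc i) = (\<Union>v\<in>Vs l n a i. piL l n a ` Psi l n a v)"

definition VV :: "nat \<Rightarrow> nat \<Rightarrow> (nat \<Rightarrow> 'k::zero poly) \<Rightarrow> real set" where
  "VV l n a = (\<Union>i. Vs l n a i)"

definition epsV :: "nat \<Rightarrow> nat \<Rightarrow> (nat \<Rightarrow> 'k::zero poly) \<Rightarrow> real \<Rightarrow> ereal" where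
  "epsV l n a v = (if {w \<in> VV l n a. w > v} = {} then \<infinity>
      else ereal ((LEAST w. w \<in> VV l n a \<and> v < w) - v))"

end

theory Submission
  imports Defs
begin

definition GG :: "nat \<Rightarrow> nat \<Rightarrow> (nat \<Rightarrow> 'k::zero poly) \<Rightarrow> (real \<times> real) set" where
  "GG l n a = {(real (l ^ i), y) | i y. i \<le> n \<and> a i \<noteq> 0 \<and> y \<ge> real (pval (a i))}"

lemma NP_GG: "newton_polygon l n a = convex hull GG l n a"
  unfolding newton_polygon_def GG_def by simp

lemma finite_PL: "finite (PL l n a)"
proof -
  have "PL l n a \<subseteq> (\<lambda>(i,j). (real (l^i), real j)) ` (SIGMA i:{..n}. {..degree (a i)})"
    unfolding PL_def by (fastforce intro: le_degree)
  thus ?thesis by (rule finite_subset) (auto intro!: finite_SigmaI)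
qed

lemma pval_coeff: "p \<noteq> 0 \<Longrightarrow> coeff p (pval p) \<noteq> 0"
  unfolding pval_def by (rule LeastI_ex) (metis leading_coeff_0_iff)

lemma PL_GG: "PL l n a \<subseteq> GG l n a"
proof
  fix r assume "r \<in> PL l n a"
  then obtain i j where r: "r = (real (l^i), real j)" "i \<le> n" "coeff (a i) j \<noteq> 0"
    unfolding PL_def by blast
  then have "a i \<noteq> 0" by auto
  moreover have "pval (a i) \<le> j" unfolding pval_def using r(3) by (rule Least_le)
  ultimately show "r \<in> GG l n a" unfolding GG_def using r by auto
qed

lemma GG_PL: "r \<in> GG l n a \<Longrightarrow> \<exists>y'. (fst r, y') \<in> PL l n a \<and> y' \<le> snd r"
proof -
  assume "r \<in> GG l n a"
  then obtain i y where r: "r = (real (l^i), y)" "i \<le> n" "a i \<noteq> 0" "y \<ge> real (pval (a i))"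
    unfolding GG_def by blast
  have "(fst r, real (pval (a i))) \<in> PL l n a" unfolding PL_def using r pval_coeff by auto
  thus ?thesis using r by auto
qed

lemma PL_fst: "l \<ge> 1 \<Longrightarrow> r \<in> PL l n a \<Longrightarrow> fst r \<ge> 1"
  unfolding PL_def by auto

lemma GG_fst: "l \<ge> 1 \<Longrightarrow> r \<in> GG l n a \<Longrightarrow> fst r \<ge> 1"
  unfolding GG_def by auto

lemma up_closed:
  assumes "r \<in> convex hull GG l n a" "t \<ge> 0"
  shows "r + (0,t) \<in> convex hull GG l n a"
proof -
  let ?K = "convex hull GG l n a"
  let ?U = "{r. \<forall>t\<ge>0. r + (0,t) \<in> ?K}"
  have "GG l n a \<subseteq> ?U"
  proof
    fix r assume "r \<in> GG l n a"
    then obtain i y where r: "r = (real (l^i), y)" "i \<le> n" "a i \<noteq> 0" "y \<ge> real (pval (a i))"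
      unfolding GG_def by blast
    have "r + (0,t) \<in> GG l n a" if "t \<ge> 0" for t
    proof -
      have "r + (0,t) = (real (l^i), y + t)" using r by simp
      thus ?thesis unfolding GG_def using r that by auto
    qed
    thus "r \<in> ?U" using hull_subset[of "GG l n a" convex] by blast
  qed
  moreover have "convex ?U"
  proof (rule convexI)
    fix x y and u v :: real
    assume x: "x \<in> ?U" and y: "y \<in> ?U" and uv: "0 \<le> u" "0 \<le> v" "u + v = 1"
    have "u *\<^sub>R x + v *\<^sub>R y + (0,t) \<in> ?K" if t: "t \<ge> 0" for t
    proof -
      have "u *\<^sub>R (x + (0,t)) + v *\<^sub>R (y + (0,t)) \<in> ?K"
      proof (rule convexD[OF convex_convex_hull])
        show "x + (0,t) \<in> ?K" using x t by blast
        show "y + (0,t) \<in> ?K" using y t by blast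
      qed (fact uv)+
      moreover have "u *\<^sub>R (x + (0,t)) + v *\<^sub>R (y + (0,t)) = u *\<^sub>R x + v *\<^sub>R y + (0,t)"
      proof -
        have "u * t + v * t = t" using uv(3) by (metis distrib_right mult_1)
        thus ?thesis by (simp add: prod_eq_iff ring_distribs)
      qed
      ultimately show "u *\<^sub>R x + v *\<^sub>R y + (0,t) \<in> ?K" by simp
    qed
    thus "u *\<^sub>R x + v *\<^sub>R y \<in> ?U" by blast
  qed
  ultimately have "?K \<subseteq> ?U" by (rule hull_minimal)
  thus ?thesis using assms by blast
qed

lemma face_line:
  fixes F :: "(real \<times> real) set"
  assumes "aff_dim F = 1" "p \<in> F" "q \<in> F" "fst p \<noteq> fst q"
    "\<mu> = (snd q - snd p) / (fst q - fst p)" "r \<in> F"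
  shows "snd r - \<mu> * fst r = snd p - \<mu> * fst p"
proof -
  have fpq: "snd q - \<mu> * fst q = snd p - \<mu> * fst p"
    using assms(4,5) by (simp add: field_simps)
  have pq: "p \<noteq> q" using assms(4) by auto
  have "affine hull {p,q} = affine hull F"
  proof (rule affine_dim_equal)
    show "affine hull {p,q} \<subseteq> affine hull F" using assms(2,3) by (intro hull_mono) auto
    show "aff_dim (affine hull {p, q}) = aff_dim (affine hull F)" using assms(1) pq by simp
    show "affine (affine hull {p,q})" by (rule affine_affine_hull)
    show "affine (affine hull F)" by (rule affine_affine_hull)
    show "affine hull {p,q} \<noteq> {}" by simp
  qed
  moreover have "r \<in> affine hull F" using assms(6) hull_subset[of F affine] by blast
  ultimately obtain u v where uv: "u + v = 1" "r = u *\<^sub>R p + v *\<^sub>R q"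
    unfolding affine_hull_2 by blast
  have "snd r - \<mu> * fst r = u * (snd p - \<mu> * fst p) + v * (snd q - \<mu> * fst q)"
    using uv(2) by (simp add: algebra_simps)
  also have "\<dots> = snd p - \<mu> * fst p" using fpq uv(1) by (metis distrib_right mult_1)
  finally show ?thesis .
qed

lemma face_support:
  fixes F :: "(real \<times> real) set"
  assumes face: "F face_of convex hull GG l n a" and "aff_dim F = 1" "p \<in> F" "q \<in> F" "fst p \<noteq> fst q"
    "\<mu> = (snd q - snd p) / (fst q - fst p)" and rK: "r \<in> convex hull GG l n a"
  shows "snd r - \<mu> * fst r \<ge> snd p - \<mu> * fst p"
proof (rule ccontr)
  define f where "f = (\<lambda>r::real\<times>real. snd r - \<mu> * fst r)"
  define c where "c = f p"
  let ?K = "convex hull GG l n a"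
  assume "\<not> ?thesis"
  then have fr: "f r < c" unfolding f_def c_def by simp
  have onF: "f x = c" if "x \<in> F" for x
    using face_line[OF assms(2-6) that] unfolding f_def c_def by simp
  have cF: "convex F" using face face_of_imp_convex by blast
  have FK: "F \<subseteq> ?K" using face face_of_imp_subset by blast
  define m where "m = (1/2) *\<^sub>R p + (1/2) *\<^sub>R q"
  have mF: "m \<in> F" unfolding m_def by (rule convexD[OF cF assms(3,4)]) auto
  define D where "D = (fst m - fst r) / (fst q - fst p)"
  define lam where "lam = 1 / (2 * (1 + \<bar>D\<bar>))"
  have lam0: "lam > 0" unfolding lam_def by simp
  have lamD: "\<bar>lam * D\<bar> \<le> 1/2"
  proof -
    have "\<bar>lam * D\<bar> = \<bar>D\<bar> / (2 * (1 + \<bar>D\<bar>))" unfolding lam_def by (simp add: abs_mult)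
    also have "\<dots> \<le> 1/2" by (simp add: field_simps)
    finally show ?thesis .
  qed
  define th where "th = 1/2 + lam * D"
  have th: "0 \<le> th" "th \<le> 1" unfolding th_def using lamD by auto
  define z where "z = m + lam *\<^sub>R (m - r)"
  define s where "s = (1 - th) *\<^sub>R p + th *\<^sub>R q"
  have sF: "s \<in> F" unfolding s_def by (rule convexD_alt[OF cF assms(3,4) th])
  have fsz: "fst s = fst z"
  proof -
    have 1: "fst s = fst p + th * (fst q - fst p)" unfolding s_def by (simp add: algebra_simps)
    have 2: "D * (fst q - fst p) = fst m - fst r" unfolding D_def using assms(5) by simp
    have 3: "fst m = (fst p + fst q)/2" unfolding m_def by simp
    have 4: "fst z = fst m + lam * (fst m - fst r)" unfolding z_def by simp
    have "fst s = fst p + (fst q - fst p)/2 + lam * (D * (fst q - fst p))"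
      unfolding 1 th_def by (simp add: algebra_simps)
    also have "\<dots> = fst z" unfolding 2 4 3 by (simp add: field_simps)
    finally show ?thesis .
  qed
  have fz: "f z = c + lam * (c - f r)"
    using onF[OF mF] unfolding z_def f_def by (simp add: algebra_simps)
  have fzc: "f z > c" using fz fr lam0 by simp
  have zs: "z = s + (0, f z - c)"
    using fsz onF[OF sF] unfolding f_def by (simp add: prod_eq_iff)
  have zK: "z \<in> ?K" using up_closed[of s l n a "f z - c"] sF FK fzc zs by auto
  have "m \<in> open_segment r z"
    unfolding in_segment(2)
  proof (intro conjI exI)
    show "r \<noteq> z" using fr fzc by auto
    show "0 < 1 / (1 + lam)" using lam0 by simp
    show "1 / (1 + lam) < 1" using lam0 by simp
    have eq: "(1 + lam) *\<^sub>R m = lam *\<^sub>R r + z" unfolding z_def by (simp add: algebra_simps)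
    have "m = (1 / (1 + lam)) *\<^sub>R ((1 + lam) *\<^sub>R m)" using lam0 by simp
    also have "\<dots> = (1 / (1 + lam)) *\<^sub>R (lam *\<^sub>R r + z)" by (simp only: eq)
    also have "\<dots> = (1 - 1 / (1 + lam)) *\<^sub>R r + (1 / (1 + lam)) *\<^sub>R z"
      using lam0 by (simp add: algebra_simps field_simps)
    finally show "m = (1 - 1 / (1 + lam)) *\<^sub>R r + (1 / (1 + lam)) *\<^sub>R z" .
  qed
  moreover have "\<forall>a\<in>?K. \<forall>b\<in>?K. \<forall>x\<in>F. x \<in> open_segment a b \<longrightarrow> a \<in> F \<and> b \<in> F"
    using face unfolding face_of_def by (elim conjE)
  ultimately have "r \<in> F" using rK zK mF by blast
  then show False using onF[of r] fr by simp
qed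


lemma slope_props:
  assumes "\<mu> \<in> slopes l n a"
  shows "\<exists>r0\<in>PL l n a. \<exists>r1\<in>PL l n a. (\<forall>r\<in>PL l n a. snd r0 - \<mu> * fst r0 \<le> snd r - \<mu> * fst r)
     \<and> snd r1 - \<mu> * fst r1 = snd r0 - \<mu> * fst r0 \<and> fst r1 \<noteq> fst r0"
proof -
  let ?K = "convex hull GG l n a"
  let ?P = "PL l n a"
  define f where "f = (\<lambda>r::real\<times>real. snd r - \<mu> * fst r)"
  obtain F p q where F: "F face_of ?K" "aff_dim F = 1" and pq: "p \<in> F" "q \<in> F" "fst p \<noteq> fst q"
    "\<mu> = (snd q - snd p) / (fst q - fst p)"
    using assms unfolding slopes_def NP_GG by blast
  define c where "c = f p"
  have sup: "f r \<ge> c" if "r \<in> ?K" for r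
    using face_support[OF F pq that] unfolding f_def c_def by simp
  have fq: "f q = c" using face_line[OF F(2) pq pq(2)] unfolding f_def c_def by simp
  have pK: "p \<in> ?K" "q \<in> ?K" using F(1) pq face_of_imp_subset by blast+
  then have "GG l n a \<noteq> {}" by auto
  then obtain g where "g \<in> GG l n a" by blast
  then have Pne: "?P \<noteq> {}" using GG_PL by blast
  have finP: "finite (f ` ?P)" using finite_PL by blast
  define m where "m = Min (f ` ?P)"
  have mle: "m \<le> f r" if "r \<in> ?P" for r unfolding m_def using finP that by simp
  have "m \<in> f ` ?P" unfolding m_def using Min_in[OF finP] Pne by blast
  then obtain r0 where r0: "r0 \<in> ?P" "f r0 = m" by force
  have hs: "{x. f x \<ge> m} = {x. ((-\<mu>, 1)::real\<times>real) \<bullet> x \<ge> m}"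
    by (auto simp: f_def inner_prod_def)
  have "?K \<subseteq> {x. f x \<ge> m}"
  proof (rule hull_minimal)
    show "GG l n a \<subseteq> {x. f x \<ge> m}"
    proof
      fix r assume "r \<in> GG l n a"
      then obtain y' where y': "(fst r, y') \<in> ?P" "y' \<le> snd r" using GG_PL by blast
      have "m \<le> f (fst r, y')" by (rule mle[OF y'(1)])
      also have "\<dots> \<le> f r" using y'(2) unfolding f_def by simp
      finally show "r \<in> {x. f x \<ge> m}" by simp
    qed
    show "convex {x. f x \<ge> m}" unfolding hs by (rule convex_halfspace_ge)
  qed
  then have fpm: "f p \<ge> m" using pK by blast
  have r0K: "r0 \<in> ?K" using r0(1) PL_GG hull_subset[of "GG l n a" convex] by blast
  have fr0: "f r0 = c" using sup[OF r0K] fpm r0(2) unfolding c_def by linarith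
  have "\<exists>r1\<in>?P. f r1 = f r0 \<and> fst r1 \<noteq> fst r0"
  proof (rule ccontr)
    assume nex: "\<not> ?thesis"
    define x0 where "x0 = fst r0"
    let ?H = "{x. f x \<ge> c \<and> (f x = c \<longrightarrow> fst x = x0)}"
    have "?K \<subseteq> ?H"
    proof (rule hull_minimal)
      show "GG l n a \<subseteq> ?H"
      proof
        fix r assume "r \<in> GG l n a"
        then obtain y' where y': "(fst r, y') \<in> ?P" "y' \<le> snd r" using GG_PL by blast
        have 1: "c \<le> f (fst r, y')" using mle[OF y'(1)] r0(2) fr0 by simp
        have 2: "f (fst r, y') \<le> f r" using y'(2) unfolding f_def by simp
        have "fst r = x0" if "f r = c"
        proof -
          have "f (fst r, y') = f r0" using 1 2 that fr0 by simp
          then show ?thesis using nex y'(1) unfolding x0_def by force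
        qed
        then show "r \<in> ?H" using 1 2 by auto
      qed
      show "convex ?H"
      proof (rule convexI)
        fix x y and u v :: real
        assume x: "x \<in> ?H" and y: "y \<in> ?H" and uv: "0 \<le> u" "0 \<le> v" "u + v = 1"
        have lin: "f (u *\<^sub>R x + v *\<^sub>R y) - c = u * (f x - c) + v * (f y - c)"
        proof -
          have "f (u *\<^sub>R x + v *\<^sub>R y) = u * f x + v * f y" unfolding f_def by (simp add: algebra_simps)
          moreover have "c = u * c + v * c" using uv(3) by (metis distrib_right mult_1)
          ultimately show ?thesis by (simp add: algebra_simps)
        qed
        have ex: "f x - c \<ge> 0" "f y - c \<ge> 0" using x y by auto
        have t1: "u * (f x - c) \<ge> 0" "v * (f y - c) \<ge> 0" using ex uv by auto
        have geq: "f (u *\<^sub>R x + v *\<^sub>R y) \<ge> c" using lin t1 by linarith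
        have "fst (u *\<^sub>R x + v *\<^sub>R y) = x0" if eq: "f (u *\<^sub>R x + v *\<^sub>R y) = c"
        proof -
          have "u * (f x - c) = 0" "v * (f y - c) = 0" using lin t1 eq by linarith+
          then have "u = 0 \<or> fst x = x0" "v = 0 \<or> fst y = x0" using x y by auto
          then show ?thesis using uv(3) by (auto simp: distrib_right[symmetric])
        qed
        then show "u *\<^sub>R x + v *\<^sub>R y \<in> ?H" using geq by blast
      qed
    qed
    then have "fst p = x0" "fst q = x0" using pK fq unfolding c_def by auto
    then show False using pq(3) by simp
  qed
  then show ?thesis using r0 fr0 mle unfolding f_def by metis
qed


lemma PL_fst1:
  assumes "l \<ge> 2" "r \<in> PL l n a" "fst r \<le> 1"
  shows "snd r \<ge> real (pval (a 0))"
proof -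
  obtain i j where r: "r = (real (l^i), real j)" "i \<le> n" "coeff (a i) j \<noteq> 0"
    using assms(2) unfolding PL_def by blast
  have "real (l^i) \<le> 1" using assms(3) r by simp
  then have "l^i \<le> 1" by linarith
  then have "i = 0" using assms(1)
    by (metis One_nat_def Suc_1 le_trans not_less_eq_eq one_le_power power_increasing_iff le0 power_0 le_antisym nat_power_eq_Suc_0_iff)
  then have "pval (a 0) \<le> j" unfolding pval_def using r(3) by (simp add: Least_le)
  thus ?thesis using r by simp
qed

lemma slopes_nonempty:
  assumes l: "l \<ge> 2" and n: "n \<ge> 1" and a0: "a 0 \<noteq> 0" and an: "a n \<noteq> 0"
  shows "slopes l n a \<noteq> {}"
proof -
  let ?K = "convex hull GG l n a"
  let ?P = "PL l n a"
  define A where "A = (1::real, real (pval (a 0)))"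
  have AP: "A \<in> ?P" unfolding A_def PL_def using pval_coeff[OF a0]
    by (auto intro!: exI[of _ 0])
  define Bn where "Bn = (real (l^n), real (pval (a n)))"
  have BnP: "Bn \<in> ?P" unfolding Bn_def PL_def using pval_coeff[OF an] n by auto
  have "l^1 < l^n" if "n > 1" using l that by (intro power_strict_increasing) auto
  then have "1 < l^n" using l n by (cases "n = 1") auto
  then have "(1::real) < real (l^n)" by linarith
  then have Bn1: "fst Bn > 1" unfolding Bn_def by simp
  define Q where "Q = {r \<in> ?P. fst r > 1}"
  have finQ: "finite Q" unfolding Q_def using finite_PL[of l n a] by simp
  have Qne: "Q \<noteq> {}" unfolding Q_def using BnP Bn1 by blast
  define g where "g = (\<lambda>r::real\<times>real. (snd r - snd A) / (fst r - 1))"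
  define \<mu> where "\<mu> = Min (g ` Q)"
  have "\<mu> \<in> g ` Q" unfolding \<mu>_def using finQ Qne by simp
  then obtain B where B: "B \<in> Q" "g B = \<mu>" by force
  have gle: "\<mu> \<le> g r" if "r \<in> Q" for r unfolding \<mu>_def using finQ that by simp
  define f where "f = (\<lambda>r::real\<times>real. snd r - \<mu> * fst r)"
  have PLsup: "f r \<ge> f A" if "r \<in> ?P" for r
  proof (cases "fst r > 1")
    case True
    then have "r \<in> Q" unfolding Q_def using that by simp
    then have "\<mu> \<le> (snd r - snd A) / (fst r - 1)" using gle unfolding g_def by simp
    then have "\<mu> * (fst r - 1) \<le> snd r - snd A" using True by (simp add: pos_le_divide_eq)
    then show ?thesis unfolding f_def A_def by (simp add: algebra_simps)
  next
    case False
    have "fst r \<ge> 1" using PL_fst[of l r n a] l that by simp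
    then have "fst r = 1" using False by simp
    moreover have "snd r \<ge> snd A" using PL_fst1[OF l that] False unfolding A_def by simp
    ultimately show ?thesis unfolding f_def A_def by simp
  qed
  have hs: "{x. f x \<ge> f A} = {x. ((-\<mu>, 1)::real\<times>real) \<bullet> x \<ge> f A}"
    by (auto simp: f_def inner_prod_def)
  have Ksup: "?K \<subseteq> {x. f x \<ge> f A}"
  proof (rule hull_minimal)
    show "GG l n a \<subseteq> {x. f x \<ge> f A}"
    proof
      fix r assume "r \<in> GG l n a"
      then obtain y' where y': "(fst r, y') \<in> ?P" "y' \<le> snd r" using GG_PL by blast
      have "f A \<le> f (fst r, y')" by (rule PLsup[OF y'(1)])
      also have "\<dots> \<le> f r" using y'(2) unfolding f_def by simp
      finally show "r \<in> {x. f x \<ge> f A}" by simp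
    qed
    show "convex {x. f x \<ge> f A}" unfolding hs by (rule convex_halfspace_ge)
  qed
  define w where "w = ((\<mu>, -1)::real\<times>real)"
  have wx: "w \<bullet> x = - f x" for x unfolding w_def f_def by (simp add: inner_prod_def)
  define F where "F = ?K \<inter> {x. w \<bullet> x = - f A}"
  have face: "F face_of ?K" unfolding F_def
    by (rule face_of_Int_supporting_hyperplane_le) (use Ksup wx in auto)
  have BP: "B \<in> ?P" and B1: "fst B > 1" using B(1) unfolding Q_def by auto
  have fB: "f B = f A"
  proof -
    have "\<mu> = (snd B - snd A) / (fst B - 1)" using B(2) unfolding g_def by simp
    then have "\<mu> * (fst B - 1) = snd B - snd A" using B1 by simp
    then show ?thesis unfolding f_def A_def by (simp add: algebra_simps)
  qed
  have AK: "A \<in> ?K" and BK: "B \<in> ?K" using AP BP PL_GG hull_subset[of "GG l n a" convex] by blast+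
  have AF: "A \<in> F" and BF: "B \<in> F" unfolding F_def using AK BK wx fB by auto
  have AB: "fst A \<noteq> fst B" using B1 unfolding A_def by simp
  then have ABne: "A \<noteq> B" by auto
  have "aff_dim F \<le> aff_dim {x. w \<bullet> x = - f A}" unfolding F_def by (rule aff_dim_subset) blast
  also have "\<dots> = 1"
  proof -
    have "w \<noteq> 0" unfolding w_def by (simp add: zero_prod_def)
    from aff_dim_hyperplane[OF this, of "- f A"] show ?thesis by simp
  qed
  finally have d1: "aff_dim F \<le> 1" .
  have "1 = aff_dim {A, B}" using ABne by simp
  also have "\<dots> \<le> aff_dim F" using AF BF by (intro aff_dim_subset) auto
  finally have "aff_dim F = 1" using d1 by simp
  then have "(snd B - snd A) / (fst B - fst A) \<in> slopes l n a"
    unfolding slopes_def NP_GG using face AF BF AB by blast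
  thus ?thesis by blast
qed


lemma slopes_finite: "finite (slopes l n a)"
proof -
  have "slopes l n a \<subseteq> (\<lambda>(r0,r1). (snd r1 - snd r0) / (fst r1 - fst r0)) ` (PL l n a \<times> PL l n a)"
  proof
    fix \<mu> assume "\<mu> \<in> slopes l n a"
    from slope_props[OF this] obtain r0 r1 where r: "r0 \<in> PL l n a" "r1 \<in> PL l n a"
      "snd r1 - \<mu> * fst r1 = snd r0 - \<mu> * fst r0" "fst r1 \<noteq> fst r0" by blast
    then have "\<mu> * (fst r1 - fst r0) = snd r1 - snd r0" by (simp add: algebra_simps)
    then have "\<mu> = (snd r1 - snd r0) / (fst r1 - fst r0)" using r(4) by (simp add: field_simps)
    then show "\<mu> \<in> (\<lambda>(r0,r1). (snd r1 - snd r0) / (fst r1 - fst r0)) ` (PL l n a \<times> PL l n a)"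
      using r(1,2) by force
  qed
  moreover have "finite (PL l n a \<times> PL l n a)" using finite_PL by blast
  ultimately show ?thesis using finite_subset by blast
qed

lemma piL_set: "{(q - y) / x |x y. (x, y) \<in> PL l n a} = (\<lambda>(x,y). (q - y) / x) ` PL l n a"
  by auto

lemma Psi_set: "Psi l n a v = (\<lambda>(x,y). v * x + y) ` PL l n a"
  unfolding Psi_def by auto

lemma finite_Psi: "finite (Psi l n a v)"
  unfolding Psi_set using finite_PL by blast

lemma piL_ge:
  assumes "l \<ge> 1" "q \<in> Psi l n a v"
  shows "piL l n a q \<ge> v"
proof -
  obtain x y where xy: "(x,y) \<in> PL l n a" "q = v * x + y" using assms(2) unfolding Psi_def by blast
  have "x \<ge> 1" using PL_fst[OF assms(1) xy(1)] by simp
  then have "v = (q - y) / x" using xy(2) by (simp add: field_simps)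
  also have "\<dots> \<le> piL l n a q" unfolding piL_def piL_set
    by (rule Max_ge) (use finite_PL xy(1) in auto)
  finally show ?thesis .
qed

lemma neg_slope_V1:
  assumes "l \<ge> 1" "\<mu> \<in> slopes l n a"
  shows "- \<mu> \<in> piL l n a ` Psi l n a (- \<mu>)"
proof -
  from slope_props[OF assms(2)] obtain r0 where r0: "r0 \<in> PL l n a"
    "\<forall>r\<in>PL l n a. snd r0 - \<mu> * fst r0 \<le> snd r - \<mu> * fst r" by blast
  define q where "q = (- \<mu>) * fst r0 + snd r0"
  have qP: "q \<in> Psi l n a (- \<mu>)" unfolding Psi_def q_def using r0(1)
    by (intro CollectI exI[of _ "fst r0"] exI[of _ "snd r0"]) simp
  have "piL l n a q = - \<mu>" unfolding piL_def piL_set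
  proof (rule Max_eqI)
    show "finite ((\<lambda>(x, y). (q - y) / x) ` PL l n a)" using finite_PL by blast
    fix t assume "t \<in> (\<lambda>(x, y). (q - y) / x) ` PL l n a"
    then obtain x y where xy: "(x,y) \<in> PL l n a" "t = (q - y) / x" by auto
    have x1: "x \<ge> 1" using PL_fst[OF assms(1) xy(1)] by simp
    have "q \<le> y - \<mu> * x" using r0(2) xy(1) unfolding q_def by force
    then have "q - y \<le> (- \<mu>) * x" by simp
    then show "t \<le> - \<mu>" using x1 xy(2) by (simp add: divide_le_eq)
  next
    have x1: "fst r0 \<ge> 1" using PL_fst[OF assms(1) r0(1)] by simp
    have "(q - snd r0) / fst r0 = - \<mu>" unfolding q_def using x1 by simp
    then show "- \<mu> \<in> (\<lambda>(x, y). (q - y) / x) ` PL l n a" using r0(1)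
      by (intro image_eqI[of _ _ r0]) (auto simp: case_prod_beta)
  qed
  then show ?thesis using qP by force
qed


theorem mainTheorem12:
  fixes l n d :: nat and a :: "nat \<Rightarrow> 'k::field poly"
  assumes "l \<ge> 2" and "n \<ge> 1" and "a 0 \<noteq> 0" and "a n \<noteq> 0"
    and "d \<ge> 1" and "\<forall>\<mu>\<in>slopes l n a. \<exists>k::int. real d * \<mu> = real_of_int k"
  shows "(\<forall>v \<in> Zdl d l. v < - Max (slopes l n a) \<longrightarrow>
            epsV l n a v = ereal (- Max (slopes l n a) - v) \<and> - Max (slopes l n a) - v > 0)
       \<and> epsV l n a (- Max (slopes l n a)) =
           (if Vs l n a 1 - {- Max (slopes l n a)} = {} then \<infinity>
            else ereal (Min (Vs l n a 1 - {- Max (slopes l n a)}) + Max (slopes l n a)))"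
proof -
  let ?S = "slopes l n a"
  define M where "M = Max ?S"
  have l1: "l \<ge> 1" using assms(1) by simp
  have Sne: "?S \<noteq> {}" using slopes_nonempty[OF assms(1-4)] .
  have MS: "M \<in> ?S" unfolding M_def using slopes_finite Sne by (rule Max_in)
  have leM: "\<mu> \<le> M" if "\<mu> \<in> ?S" for \<mu> unfolding M_def using slopes_finite that by (rule Max_ge)
  have V1: "Vs l n a 1 = (\<Union>v\<in>uminus ` ?S. piL l n a ` Psi l n a v)" by simp
  have V0V1: "Vs l n a 0 \<subseteq> Vs l n a 1"
  proof
    fix w assume "w \<in> Vs l n a 0"
    then obtain \<mu> where mu: "\<mu> \<in> ?S" "w = - \<mu>" by auto
    show "w \<in> Vs l n a 1" unfolding V1 using neg_slope_V1[OF l1 mu(1)] mu by blast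
  qed
  have mM: "- M \<in> Vs l n a 0" using MS by simp
  have lb: "\<forall>w\<in>Vs l n a i. w \<ge> - M" for i
  proof (induction i)
    case 0 then show ?case using leM by auto
  next
    case (Suc i)
    show ?case
    proof
      fix w assume "w \<in> Vs l n a (Suc i)"
      then obtain v q where vq: "v \<in> Vs l n a i" "q \<in> Psi l n a v" "w = piL l n a q" by auto
      have "v \<le> w" using piL_ge[OF l1 vq(2)] vq(3) by simp
      then show "w \<ge> - M" using Suc vq(1) by force
    qed
  qed
  have key: "\<forall>w\<in>Vs l n a i. w > - M \<longrightarrow> (\<exists>w'\<in>Vs l n a 1. - M < w' \<and> w' \<le> w)" for i
  proof (induction i)
    case 0 then show ?case using V0V1 by blast
  next
    case (Suc i)
    show ?case
    proof (intro ballI impI)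
      fix w assume w: "w \<in> Vs l n a (Suc i)" "w > - M"
      then obtain v q where vq: "v \<in> Vs l n a i" "q \<in> Psi l n a v" "w = piL l n a q" by auto
      have vw: "v \<le> w" using piL_ge[OF l1 vq(2)] vq(3) by simp
      have vM: "v \<ge> - M" using lb vq(1) by blast
      show "\<exists>w'\<in>Vs l n a 1. - M < w' \<and> w' \<le> w"
      proof (cases "v = - M")
        case True
        then have "w \<in> Vs l n a 1" unfolding V1 using vq MS by force
        then show ?thesis using w by blast
      next
        case False
        then have "v > - M" using vM by simp
        then obtain w' where "w' \<in> Vs l n a 1" "- M < w'" "w' \<le> v" using Suc vq(1) by blast
        then show ?thesis using vw by force
      qed
    qed
  qed
  have VV: "w \<in> VV l n a \<longleftrightarrow> (\<exists>i. w \<in> Vs l n a i)" for w unfolding VV_def by blast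
  have mMV: "- M \<in> VV l n a" using mM VV by blast
  have V1V: "Vs l n a 1 \<subseteq> VV l n a" using VV by blast
  have lbV: "w \<ge> - M" if "w \<in> VV l n a" for w using lb that VV by blast
  have keyV: "\<exists>w'\<in>Vs l n a 1. - M < w' \<and> w' \<le> w" if "w \<in> VV l n a" "w > - M" for w
    using key that VV by blast
  have finV1: "finite (Vs l n a 1)" unfolding V1 using slopes_finite finite_Psi by blast
  have part1: "epsV l n a v = ereal (- M - v) \<and> - M - v > 0" if "v < - M" for v
  proof -
    have ne: "{w \<in> VV l n a. w > v} \<noteq> {}" using mMV that by blast
    have "(LEAST w. w \<in> VV l n a \<and> v < w) = - M"
      by (rule Least_equality) (use mMV that lbV in auto)
    then show ?thesis unfolding epsV_def using ne that by simp
  qed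
  have part2: "epsV l n a (- M) = (if Vs l n a 1 - {- M} = {} then \<infinity>
            else ereal (Min (Vs l n a 1 - {- M}) + M))"
  proof (cases "Vs l n a 1 - {- M} = {}")
    case True
    have "{w \<in> VV l n a. w > - M} = {}"
    proof (rule ccontr)
      assume "{w \<in> VV l n a. w > - M} \<noteq> {}"
      then obtain w where "w \<in> VV l n a" "w > - M" by blast
      from keyV[OF this] obtain w' where "w' \<in> Vs l n a 1" "- M < w'" by blast
      then show False using True by blast
    qed
    then show ?thesis unfolding epsV_def using True by simp
  next
    case False
    define m where "m = Min (Vs l n a 1 - {- M})"
    have fin: "finite (Vs l n a 1 - {- M})" using finV1 by simp
    have mIn: "m \<in> Vs l n a 1 - {- M}" unfolding m_def using fin False by (rule Min_in)
    have mle: "m \<le> x" if "x \<in> Vs l n a 1 - {- M}" for x unfolding m_def using fin that by (rule Min_le)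
    have mV: "m \<in> VV l n a" using mIn V1V by blast
    have mgt: "m > - M" using lbV[OF mV] mIn by force
    have ne: "{w \<in> VV l n a. w > - M} \<noteq> {}" using mV mgt by blast
    have "(LEAST w. w \<in> VV l n a \<and> - M < w) = m"
    proof (rule Least_equality)
      show "m \<in> VV l n a \<and> - M < m" using mV mgt by simp
      fix y assume y: "y \<in> VV l n a \<and> - M < y"
      then obtain w' where "w' \<in> Vs l n a 1" "- M < w'" "w' \<le> y" using keyV by blast
      then show "m \<le> y" using mle[of w'] by force
    qed
    then show ?thesis unfolding epsV_def using ne False m_def by simp
  qed
  show ?thesis using part1 part2 unfolding M_def by blast
qed

end
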